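(* There exists a finite game $G$ such that $\mathcal{X}^{CCE}\not\subseteq\mathcal{X}^{PS\text{-}NF}$, i.e. some coarse correlated equilibrium $x$ of $G$ is not equal to $x_\varnothing$ for any perfectly stable $\mathbf{x}=[x_\pi]$ of the Stackelberg game $(G,N,\emptyset)$.
   Context: A finite game is $G=(N,\{S_p\}_{p\in N},\{u_p\}_{p\in N})$ with players $N=\{1,\dots,n\}$, finite nonempty strategy sets $S_p$, and utilities $u_p:S\to\mathbb{R}$ on $S=\prod_{p\in N}S_p$; write $s=(s_p,s_{-p})$ with $s_{-p}\in S_{-p}=\prod_{q\neq p}S_q$. $\mathcal{X}=\Delta(S)$ is the set of probability distributions on $S$ and $u_p(x)=\sum_{s\in S}x(s)u_p(s)$ for $x\in\mathcal{X}$. For $P\subseteq N$, $\mathcal{X}^{CE}_P$ is the set of $x\in\mathcal{X}$ such that for every $p\in P$ and all $s_p\neq s_p'\in S_p$: $\sum_{s_{-p}\in S_{-p}} x(s_p,s_{-p})\,(u_p(s_p,s_{-p})-u_p(s_p',s_{-p}))\ge 0$; $\mathcal{X}^{CE}=\mathcal{X}^{CE}_N$ is the set of correlated equilibria of $G$. $\mathcal{X}^{CCE}$ is the set of coarse correlated equilibria of $G$: $x\in\mathcal{X}$ with $\sum_{s\in S}x(s)(u_p(s)-u_p(s_p',s_{-p}))\ge 0$ for all $p\in N$, $s_p'\in S_p$. A Stackelberg game (SG) is a triple $(G,L,F)$ with $L\cup F=N$ and $L\cap F=\emptyset$ (leaders and followers). For $P\subseteq N$, $\Pi_P$ is the set of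 ordered subsets of $P$ (finite sequences of pairwise distinct elements of $P$, including the empty sequence $\varnothing$); for $\pi\in\Pi_P$ and $p\in P$ not occurring in $\pi$, $\pi p$ is $\pi$ with $p$ appended; when used as a set, $\pi$ means its set of entries. $\mathbf{X}=\prod_{\pi\in\Pi_L}\mathcal{X}^{CE}_{\pi\cup F}$, with elements $\mathbf{x}=[x_\pi]_{\pi\in\Pi_L}$. For $\mathbf{x}\in\mathbf{X}$ and $\pi\in\Pi_L$, $x_\pi$ is stable if $u_p(x_\pi)\ge u_p(x_{\pi p})$ for all $p\in L\setminus\pi$; $\mathbf{x}$ is stable if $x_\varnothing$ is stable, and perfectly stable if $x_\pi$ is stable for every $\pi\in\Pi_L$; $\mathbf{X}^{S}$ and $\mathbf{X}^{PS}$ denote the sets of stable and perfectly stable elements of $\mathbf{X}$. $\mathcal{X}^{S\text{-}NF}=\{x_\varnothing:\mathbf{x}\in\mathbf{X}^S\}$ and $\mathcal{X}^{PS\text{-}NF}=\{x_\varnothing:\mathbf{x}\in\mathbf{X}^{PS}\}$ computed for the SG $(G,N,\emptyset)$ in which every player is a leader. *)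

theory Defs
  imports "HOL-Analysis.Analysis"
begin

text \<open>Strategies are encoded as naturals; a pure profile is an extensional
  function in PiE N S.\<close>

type_synonym profile = "nat \<Rightarrow> nat"
type_synonym dist = "profile \<Rightarrow> real"

definition finite_game :: "nat set \<Rightarrow> (nat \<Rightarrow> nat set) \<Rightarrow> bool" where
  "finite_game N S \<longleftrightarrow> finite N \<and> (\<forall>p\<in>N. finite (S p) \<and> S p \<noteq> {})"

definition profiles :: "nat set \<Rightarrow> (nat \<Rightarrow> nat set) \<Rightarrow> profile set" where
  "profiles N S = PiE N S"

definition distrs :: "nat set \<Rightarrow> (nat \<Rightarrow> nat set) \<Rightarrow> dist set" where
  "distrs N S = {x. (\<forall>s. 0 \<le> x s) \<and> (\<forall>s. s \<notin> profiles N S \<longrightarrow> x s = 0)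
                    \<and> (\<Sum>s\<in>profiles N S. x s) = 1}"

definition exp_util :: "nat set \<Rightarrow> (nat \<Rightarrow> nat set) \<Rightarrow> (nat \<Rightarrow> profile \<Rightarrow> real)
                         \<Rightarrow> nat \<Rightarrow> dist \<Rightarrow> real" where
  "exp_util N S u p x = (\<Sum>s\<in>profiles N S. x s * u p s)"

text \<open>X^CE_P: the sum over s_{-p} of x(s_p,s_{-p})(...) is the sum over profiles
  s with s p = a.\<close>
definition CE_P :: "nat set \<Rightarrow> (nat \<Rightarrow> nat set) \<Rightarrow> (nat \<Rightarrow> profile \<Rightarrow> real)
                     \<Rightarrow> nat set \<Rightarrow> dist set" where
  "CE_P N S u P = {x \<in> distrs N S. \<forall>p\<in>P. \<forall>a\<in>S p. \<forall>b\<in>S p. a \<noteq> b \<longrightarrow>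
      0 \<le> (\<Sum>s\<in>{s \<in> profiles N S. s p = a}. x s * (u p s - u p (s(p := b))))}"

definition CCE :: "nat set \<Rightarrow> (nat \<Rightarrow> nat set) \<Rightarrow> (nat \<Rightarrow> profile \<Rightarrow> real) \<Rightarrow> dist set" where
  "CCE N S u = {x \<in> distrs N S. \<forall>p\<in>N. \<forall>b\<in>S p.
      0 \<le> (\<Sum>s\<in>profiles N S. x s * (u p s - u p (s(p := b))))}"

definition ordered_subsets :: "nat set \<Rightarrow> nat list set" where
  "ordered_subsets P = {\<pi>. distinct \<pi> \<and> set \<pi> \<subseteq> P}"

definition SG_X :: "nat set \<Rightarrow> (nat \<Rightarrow> nat set) \<Rightarrow> (nat \<Rightarrow> profile \<Rightarrow> real)
                     \<Rightarrow> nat set \<Rightarrow> nat set \<Rightarrow> (nat list \<Rightarrow> dist) set" where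
  "SG_X N S u L F = {X. \<forall>\<pi>\<in>ordered_subsets L. X \<pi> \<in> CE_P N S u (set \<pi> \<union> F)}"

definition stable_at :: "nat set \<Rightarrow> (nat \<Rightarrow> nat set) \<Rightarrow> (nat \<Rightarrow> profile \<Rightarrow> real)
                     \<Rightarrow> nat set \<Rightarrow> (nat list \<Rightarrow> dist) \<Rightarrow> nat list \<Rightarrow> bool" where
  "stable_at N S u L X \<pi> \<longleftrightarrow> (\<forall>p\<in>L - set \<pi>. exp_util N S u p (X (\<pi> @ [p])) \<le> exp_util N S u p (X \<pi>))"

definition perfectly_stable :: "nat set \<Rightarrow> (nat \<Rightarrow> nat set) \<Rightarrow> (nat \<Rightarrow> profile \<Rightarrow> real)
                     \<Rightarrow> nat set \<Rightarrow> nat set \<Rightarrow> (nat list \<Rightarrow> dist) set" where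
  "perfectly_stable N S u L F = {X \<in> SG_X N S u L F. \<forall>\<pi>\<in>ordered_subsets L. stable_at N S u L X \<pi>}"

definition PS_NF :: "nat set \<Rightarrow> (nat \<Rightarrow> nat set) \<Rightarrow> (nat \<Rightarrow> profile \<Rightarrow> real) \<Rightarrow> dist set" where
  "PS_NF N S u = {X [] | X. X \<in> perfectly_stable N S u N {}}"

end

theory Submission
  imports Defs
begin

definition pr :: "nat \<Rightarrow> nat \<Rightarrow> profile" where
  "pr a b = (\<lambda>i. if i = 1 then a else if i = 2 then b else undefined)"

lemma pr_app[simp]: "pr a b 1 = a" "pr a b 2 = b" "pr a b (Suc 0) = a"
  by (auto simp: pr_def)

lemma pr_inj[simp]: "pr a b = pr c d \<longleftrightarrow> a = c \<and> b = d"
  by (metis pr_app)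

lemma profiles2: "profiles {1..2} S = (\<lambda>(a,b). pr a b) ` (S 1 \<times> S 2)"
proof
  show "profiles {1..2} S \<subseteq> (\<lambda>(a,b). pr a b) ` (S 1 \<times> S 2)"
  proof
    fix s assume s: "s \<in> profiles {1..2} S"
    have "s = pr (s 1) (s 2)"
    proof
      fix i show "s i = pr (s 1) (s 2) i"
        using s unfolding profiles_def pr_def PiE_def extensional_def
        by (cases "i = 1"; cases "i = 2") auto
    qed
    moreover have "s 1 \<in> S 1" "s 2 \<in> S 2" using s unfolding profiles_def by auto
    ultimately show "s \<in> (\<lambda>(a,b). pr a b) ` (S 1 \<times> S 2)" by force
  qed
next
  show "(\<lambda>(a,b). pr a b) ` (S 1 \<times> S 2) \<subseteq> profiles {1..2} S"
  proof
    fix s assume "s \<in> (\<lambda>(a,b). pr a b) ` (S 1 \<times> S 2)"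
    then obtain a b where "s = pr a b" "a \<in> S 1" "b \<in> S 2" by auto
    moreover have "{1..2::nat} = {1,2}" by auto
    ultimately show "s \<in> profiles {1..2} S"
      unfolding profiles_def pr_def PiE_def extensional_def by auto
  qed
qed

lemma sum2: "(\<Sum>s\<in>profiles {1..2} S. g s) = (\<Sum>a\<in>S 1. \<Sum>b\<in>S 2. g (pr a b))"
proof -
  have inj: "inj_on (\<lambda>(a,b). pr a b) (S 1 \<times> S 2)"
    by (auto simp: inj_on_def)
  have "(\<Sum>s\<in>profiles {1..2} S. g s) = (\<Sum>ab\<in>S 1 \<times> S 2. g ((\<lambda>(a,b). pr a b) ab))"
    unfolding profiles2 using sum.reindex[OF inj] by (simp add: comp_def)
  also have "\<dots> = (\<Sum>a\<in>S 1. \<Sum>b\<in>S 2. g (pr a b))"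
    by (simp add: sum.cartesian_product case_prod_beta)
  finally show ?thesis .
qed

definition S0 :: "nat \<Rightarrow> nat set" where
  "S0 p = (if p = 1 then {0,1,2} else {0,1})"

definition u0 :: "nat \<Rightarrow> profile \<Rightarrow> real" where
  "u0 p s = (if p = 1 then
      (if s 1 = 0 then (if s 2 = 0 then 0 else 1) else if s 1 = 1 then (if s 2 = 0 then 2 else 0)
       else (if s 2 = 0 then 1 else 0))
    else (if s 2 = 0 then (if s 1 = 0 then 1 else if s 1 = 1 then 2 else 0) else 0))"

definition x0 :: dist where
  "x0 s = (if s = pr 1 0 then 1/3 else if s = pr 2 1 then 2/3 else 0)"

lemma S01[simp]: "S0 1 = {0,1,2}" and S02[simp]: "S0 2 = {0,1}"
  by (auto simp: S0_def)

lemma sumS0: "(\<Sum>s\<in>profiles {1..2} S0. g s) =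
   g (pr 0 0) + g (pr 0 1) + g (pr 1 0) + g (pr 1 1) + g (pr 2 0) + g (pr 2 1)"
  unfolding sum2 S01 S02 by (simp add: algebra_simps)

lemma finprof: "finite (profiles {1..2} S0)"
  unfolding profiles_def by (rule finite_PiE) (auto simp: S0_def)

lemma sumfilt: "(\<Sum>s\<in>{s \<in> profiles {1..2} S0. s p = a}. g s) =
   (\<Sum>s\<in>profiles {1..2} S0. if s p = a then g s else 0)"
  using finprof by (simp add: sum.inter_filter)

lemma x0_CCE: "x0 \<in> CCE {1..2} S0 u0"
  unfolding CCE_def distrs_def
proof (intro CollectI conjI ballI allI impI)
  fix s show "0 \<le> x0 s" by (simp add: x0_def)
next
  fix s assume "s \<notin> profiles {1..2} S0"
  moreover have "pr 1 0 \<in> profiles {1..2} S0"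
    unfolding profiles2 by (rule image_eqI[where x="(1,0)"]) (auto simp: S0_def)
  moreover have "pr 2 1 \<in> profiles {1..2} S0"
    unfolding profiles2 by (rule image_eqI[where x="(2,1)"]) (auto simp: S0_def)
  ultimately show "x0 s = 0" by (auto simp: x0_def)
next
  show "sum x0 (profiles {1..2} S0) = 1" unfolding sumS0 by (simp add: x0_def)
next
  fix p b assume p: "p \<in> {1..2::nat}" and b: "b \<in> S0 p"
  from p have "p = 1 \<or> p = 2" by auto
  then have "(p = 1 \<and> (b = 0 \<or> b = 1 \<or> b = 2)) \<or> (p = 2 \<and> (b = 0 \<or> b = 1))"
    using b unfolding S0_def by auto
  then show "0 \<le> (\<Sum>s\<in>profiles {1..2} S0. x0 s * (u0 p s - u0 p (s(p := b))))"
    unfolding sumS0 by (elim disjE conjE; simp add: x0_def u0_def)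
qed

theorem mainTheorem16:
  shows "\<exists>(n::nat) (S :: nat \<Rightarrow> nat set) (u :: nat \<Rightarrow> profile \<Rightarrow> real).
           1 \<le> n \<and> finite_game {1..n} S \<and>
           \<not> (CCE {1..n} S u \<subseteq> PS_NF {1..n} S u)"
proof (intro exI conjI)
  show "1 \<le> (2::nat)" by simp
  show "finite_game {1..2} S0" unfolding finite_game_def by (auto simp: S0_def)
  show "\<not> (CCE {1..2} S0 u0 \<subseteq> PS_NF {1..2} S0 u0)"
  proof
    assume "CCE {1..2} S0 u0 \<subseteq> PS_NF {1..2} S0 u0"
    with x0_CCE obtain X where X: "X \<in> perfectly_stable {1..2} S0 u0 {1..2} {}"
      and X0: "X [] = x0"
      unfolding PS_NF_def by auto
    have os12: "[1,2] \<in> ordered_subsets {1..2::nat}" "[] \<in> ordered_subsets {1..2::nat}"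
      "[1] \<in> ordered_subsets {1..2::nat}"
      by (auto simp: ordered_subsets_def)
    have sg: "\<forall>\<pi>\<in>ordered_subsets {1..2}. X \<pi> \<in> CE_P {1..2} S0 u0 (set \<pi> \<union> {})"
      using X unfolding perfectly_stable_def SG_X_def by blast
    have stb: "\<forall>\<pi>\<in>ordered_subsets {1..2}. stable_at {1..2} S0 u0 {1..2} X \<pi>"
      using X unfolding perfectly_stable_def by blast
    have ce': "X [1,2] \<in> CE_P {1..2} S0 u0 (set [1,2] \<union> {})"
      using sg os12(1) by blast
    have ce: "X [1,2] \<in> CE_P {1..2} S0 u0 {1,2}"
      using ce' by simp
    have st0: "exp_util {1..2} S0 u0 1 (X [1]) \<le> exp_util {1..2} S0 u0 1 (X [])"
    proof -
      have "stable_at {1..2} S0 u0 {1..2} X []" using stb os12(2) by blast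
      moreover have "(1::nat) \<in> {1..2} - set []" by simp
      ultimately show ?thesis unfolding stable_at_def by fastforce
    qed
    have st1: "exp_util {1..2} S0 u0 2 (X [1,2]) \<le> exp_util {1..2} S0 u0 2 (X [1])"
    proof -
      have "stable_at {1..2} S0 u0 {1..2} X [1]" using stb os12(3) by blast
      moreover have "(2::nat) \<in> {1..2} - set [1]" by simp
      ultimately show ?thesis unfolding stable_at_def by fastforce
    qed
    have d1: "X [1] \<in> distrs {1..2} S0"
      using sg os12(3) unfolding CE_P_def by blast
    define z where "z = X [1,2]"
    define y where "y = X [1]"
    have zd: "z \<in> distrs {1..2} S0" and zc: "\<forall>p\<in>{1,2}. \<forall>a\<in>S0 p. \<forall>b\<in>S0 p. a \<noteq> b \<longrightarrow>
      0 \<le> (\<Sum>s\<in>{s \<in> profiles {1..2} S0. s p = a}. z s * (u0 p s - u0 p (s(p := b))))"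
      using ce unfolding z_def CE_P_def by auto
    have c1: "0 \<le> (\<Sum>s\<in>{s \<in> profiles {1..2} S0. s 2 = 1}. z s * (u0 2 s - u0 2 (s(2 := 0))))"
      by (rule zc[rule_format]) (auto simp: S0_def)
    have c2: "0 \<le> (\<Sum>s\<in>{s \<in> profiles {1..2} S0. s 1 = 0}. z s * (u0 1 s - u0 1 (s(1 := 1))))"
      by (rule zc[rule_format]) (auto simp: S0_def)
    have c3: "0 \<le> (\<Sum>s\<in>{s \<in> profiles {1..2} S0. s 1 = 2}. z s * (u0 1 s - u0 1 (s(1 := 1))))"
      by (rule zc[rule_format]) (auto simp: S0_def)
    have c4: "0 \<le> (\<Sum>s\<in>{s \<in> profiles {1..2} S0. s 1 = 2}. z s * (u0 1 s - u0 1 (s(1 := 0))))"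
      by (rule zc[rule_format]) (auto simp: S0_def)
    note c1 c2 c3 c4
    note cs = this[unfolded sumfilt sumS0, simplified u0_def, simplified]
    have zn: "\<forall>s. 0 \<le> z s" "sum z (profiles {1..2} S0) = 1" using zd unfolding distrs_def by auto
    have yn: "\<forall>s. 0 \<le> y s" "sum y (profiles {1..2} S0) = 1" using d1 unfolding distrs_def y_def by auto
    note st0' = st0[folded y_def, unfolded X0 exp_util_def sumS0, simplified u0_def x0_def, simplified]
    note st1' = st1[folded y_def z_def, unfolded exp_util_def sumS0, simplified u0_def, simplified]
    note zall = cs zn(2)[unfolded sumS0] zn(1)[rule_format, of "pr 0 0"]
      zn(1)[rule_format, of "pr 0 1"] zn(1)[rule_format, of "pr 1 1"] zn(1)[rule_format, of "pr 2 0"]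
      zn(1)[rule_format, of "pr 2 1"] zn(1)[rule_format, of "pr 1 0"]
    have "z (pr (Suc 0) 0) = 1" using zall[unfolded One_nat_def] by linarith
    note yall = this zn(1)[rule_format, of "pr 0 0"] st0' st1' yn(2)[unfolded sumS0] yn(1)[rule_format, of "pr 0 0"]
      yn(1)[rule_format, of "pr 0 1"] yn(1)[rule_format, of "pr 1 1"] yn(1)[rule_format, of "pr 2 0"]
      yn(1)[rule_format, of "pr 2 1"] yn(1)[rule_format, of "pr 1 0"]
    show False using yall[unfolded One_nat_def] by linarith
  qed
qed

end
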